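(* Let $L>0,\alpha>0$. There exists a constant $F>0$ such that for any $\lambda\ge0$ and any $b\in\Lambda(\alpha)$, the principal eigenfunction $\psi\in E_L$ of $-L_{\lambda,b}$ satisfies $\max\psi/\min\psi\le F$.
   Context: $\Lambda(\alpha)$: $b\in C^1(\mathbb R)$, $b\ge0$, $L$-periodic, $\int_0^Lb=\alpha L$. $E_L$ is the set of positive $L$-periodic functions in $H^1_{loc}(\mathbb R)$. $-L_{\lambda,b}\psi=-\psi''+2\lambda\psi'-b\psi$ on $L$-periodic functions; its principal eigenfunction is a positive $L$-periodic $\psi$ with $-L_{\lambda,b}\psi=\mu(\lambda,b)\psi$ for the principal eigenvalue $\mu(\lambda,b)$. *)

theory Defs
  imports "HOL-Analysis.Analysis"
begin

definition periodic_fun :: "real \<Rightarrow> (real \<Rightarrow> real) \<Rightarrow> bool" where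
  "periodic_fun L f \<longleftrightarrow> (\<forall>x. f (x + L) = f x)"

definition C1_real :: "(real \<Rightarrow> real) \<Rightarrow> bool" where
  "C1_real b \<longleftrightarrow> (\<exists>b'. (\<forall>x. (b has_real_derivative b' x) (at x)) \<and> continuous_on UNIV b')"

definition Lambda_class :: "real \<Rightarrow> real \<Rightarrow> (real \<Rightarrow> real) set" where
  "Lambda_class L \<alpha> = {b. C1_real b \<and> (\<forall>x. b x \<ge> 0) \<and> periodic_fun L b
      \<and> integral {0..L} b = \<alpha> * L}"

text \<open>psi is a positive L-periodic (classical, C^2) solution of
  -psi'' + 2 lambda psi' - b psi = mu psi, i.e. a principal eigenfunction of -L_{lambda,b}
  with principal eigenvalue mu (the principal eigenvalue is the unique eigenvalue
  admitting a positive periodic eigenfunction).\<close>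
definition principal_eigenfunction ::
  "real \<Rightarrow> real \<Rightarrow> (real \<Rightarrow> real) \<Rightarrow> real \<Rightarrow> (real \<Rightarrow> real) \<Rightarrow> bool" where
  "principal_eigenfunction L lam b \<mu> \<psi> \<longleftrightarrow>
     (\<forall>x. \<psi> x > 0) \<and> periodic_fun L \<psi> \<and>
     (\<exists>\<psi>' \<psi>''. (\<forall>x. (\<psi> has_real_derivative \<psi>' x) (at x)) \<and>
                (\<forall>x. (\<psi>' has_real_derivative \<psi>'' x) (at x)) \<and>
                continuous_on UNIV \<psi>'' \<and>
                (\<forall>x. - \<psi>'' x + 2 * lam * \<psi>' x - b x * \<psi> x = \<mu> * \<psi> x))"

end

theory Submission
  imports Defs
begin

lemma per_nat: assumes "periodic_fun L f" shows "f (x + real n * L) = f x"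
proof (induction n)
  case 0 then show ?case by simp
next
  case (Suc n)
  have "f (x + real (Suc n) * L) = f ((x + real n * L) + L)" by (simp add: algebra_simps)
  also have "\<dots> = f (x + real n * L)" using assms unfolding periodic_fun_def by blast
  finally show ?case using Suc by simp
qed

lemma per_int: assumes "periodic_fun L f" shows "f (x + real_of_int n * L) = f x"
proof (cases "n \<ge> 0")
  case True
  define k where "k = nat n"
  then have "n = int k" using True by simp
  then show ?thesis using per_nat[OF assms] by simp
next
  case False
  define k where "k = nat (- n)"
  then have k: "n = - int k" using False by simp
  have "f (x + real_of_int n * L + real k * L) = f (x + real_of_int n * L)" using per_nat[OF assms] by blast
  then show ?thesis using k by simp
qed

lemma per_range: assumes "periodic_fun L f" "L > 0" shows "range f = f ` {a..a+L}"
proof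
  show "range f \<subseteq> f ` {a..a+L}"
  proof
    fix y assume "y \<in> range f" then obtain x where y: "y = f x" by auto
    define n where "n = \<lfloor>(x - a) / L\<rfloor>"
    have "real_of_int n \<le> (x - a)/L" "(x-a)/L < real_of_int n + 1" unfolding n_def by linarith+
    then have "real_of_int n * L \<le> x - a" "x - a < (real_of_int n + 1) * L"
      using assms(2) by (auto simp: field_simps)
    then have "x + real_of_int (-n) * L \<in> {a..a+L}" by (auto simp: algebra_simps)
    moreover have "f (x + real_of_int (-n) * L) = y" using per_int[OF assms(1)] y by blast
    ultimately show "y \<in> f ` {a..a+L}" by (metis image_eqI)
  qed
qed auto

lemma per_max: assumes "periodic_fun L f" "L > 0" "continuous_on UNIV f"
  shows "\<exists>x0\<in>{a..a+L}. \<forall>y. f y \<le> f x0"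
proof -
  have c: "continuous_on {a..a+L} f" using continuous_on_subset[OF assms(3)] by blast
  have ne: "{a..a+L} \<noteq> {}" using assms(2) by simp
  obtain x0 where x0: "x0\<in>{a..a+L}" "\<forall>y\<in>{a..a+L}. f y \<le> f x0"
    using continuous_attains_sup[OF compact_Icc ne c] by blast
  have "\<forall>y. f y \<le> f x0"
  proof
    fix y
    have "f y \<in> f ` {a..a+L}" using per_range[OF assms(1,2), of a] by (metis rangeI)
    then obtain z where "z \<in> {a..a+L}" "f y = f z" by auto
    then show "f y \<le> f x0" using x0(2) by simp
  qed
  then show ?thesis using x0(1) by blast
qed

lemma per_min: assumes "periodic_fun L f" "L > 0" "continuous_on UNIV f"
  shows "\<exists>x0\<in>{a..a+L}. \<forall>y. f x0 \<le> f y"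
proof -
  have c: "continuous_on {a..a+L} f" using continuous_on_subset[OF assms(3)] by blast
  have ne: "{a..a+L} \<noteq> {}" using assms(2) by simp
  obtain x0 where x0: "x0\<in>{a..a+L}" "\<forall>y\<in>{a..a+L}. f x0 \<le> f y"
    using continuous_attains_inf[OF compact_Icc ne c] by blast
  have "\<forall>y. f x0 \<le> f y"
  proof
    fix y
    have "f y \<in> f ` {a..a+L}" using per_range[OF assms(1,2), of a] by (metis rangeI)
    then obtain z where "z \<in> {a..a+L}" "f y = f z" by auto
    then show "f x0 \<le> f y" using x0(2) by simp
  qed
  then show ?thesis using x0(1) by blast
qed

lemma per_shift_int: assumes "periodic_fun L f" "L > 0" "continuous_on UNIV f" "0 \<le> a" "a \<le> L"
  shows "integral {a..a+L} f = integral {0..L} (f::real\<Rightarrow>real)"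
proof -
  have int: "f integrable_on {u..v}" for u v using assms(3) integrable_continuous_real continuous_on_subset by blast
  have "integral {a..a+L} f = integral {a..L} f + integral {L..a+L} f"
    using Henstock_Kurzweil_Integration.integral_combine[of a L "a+L" f] int assms by (simp add: add.commute)
  moreover have "integral {L..a+L} f = integral {0..a} f"
  proof -
    have "f \<circ> (+) L = f" using assms(1) unfolding periodic_fun_def by (auto simp: add.commute)
    then show ?thesis using integral_shift_Icc_real[of 0 a f L] by (simp add: add.commute)
  qed
  moreover have "integral {0..L} f = integral {0..a} f + integral {a..L} f"
    using Henstock_Kurzweil_Integration.integral_combine[of 0 a L f] int assms by simp
  ultimately show ?thesis by simp
qed


lemma deriv_cont: assumes "\<forall>x. (f has_real_derivative f' x) (at x)" shows "continuous_on UNIV f"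
  using assms by (meson DERIV_isCont continuous_at_imp_continuous_on)

lemma key:
  fixes L \<alpha> lam \<mu> :: real and b \<psi> :: "real \<Rightarrow> real"
  assumes L: "L > 0" and lam: "lam \<ge> 0" and bL: "b \<in> Lambda_class L \<alpha>"
    and pe: "principal_eigenfunction L lam b \<mu> \<psi>"
  shows "Sup (range \<psi>) / Inf (range \<psi>) \<le> exp (1 + 2 * \<alpha> * L^2)"
proof -
  from bL obtain b' where bd: "\<forall>x. (b has_real_derivative b' x) (at x)" and bnn: "\<forall>x. b x \<ge> 0"
    and bper: "periodic_fun L b" and bint: "integral {0..L} b = \<alpha> * L"
    unfolding Lambda_class_def C1_real_def by auto
  from pe obtain \<psi>' \<psi>'' where pos: "\<forall>x. \<psi> x > 0" and pper: "periodic_fun L \<psi>"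
    and d1: "\<forall>x. (\<psi> has_real_derivative \<psi>' x) (at x)"
    and d2: "\<forall>x. (\<psi>' has_real_derivative \<psi>'' x) (at x)"
    and c2: "continuous_on UNIV \<psi>''"
    and eq: "\<forall>x. - \<psi>'' x + 2 * lam * \<psi>' x - b x * \<psi> x = \<mu> * \<psi> x"
    unfolding principal_eigenfunction_def by blast
  have cb: "continuous_on UNIV b" using deriv_cont[OF bd] .
  have cp: "continuous_on UNIV \<psi>" using deriv_cont[OF d1] .
  have cp1: "continuous_on UNIV \<psi>'" using deriv_cont[OF d2] .
  have p1per: "periodic_fun L \<psi>'" unfolding periodic_fun_def
  proof
    fix x
    have "((\<lambda>x. \<psi> (x + L)) has_real_derivative \<psi>' (x + L)) (at x)"
      using d1 DERIV_shift by blast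
    moreover have "(\<lambda>x. \<psi> (x + L)) = \<psi>" using pper unfolding periodic_fun_def by auto
    ultimately show "\<psi>' (x + L) = \<psi>' x" using d1 DERIV_unique by metis
  qed
  obtain xM where xM: "xM \<in> {0..0+L}" "\<forall>y. \<psi> y \<le> \<psi> xM" using per_max[OF pper L cp] by blast
  obtain xm where xm: "xm \<in> {xM..xM+L}" "\<forall>y. \<psi> xm \<le> \<psi> y" using per_min[OF pper L cp] by blast
  define M where "M = \<psi> xM"
  define m0 where "m0 = \<psi> xm"
  have m0pos: "m0 > 0" using pos m0_def by auto
  have int: "f integrable_on {u..v}" if "continuous_on UNIV f" for f :: "real \<Rightarrow> real" and u v
    using that integrable_continuous_real continuous_on_subset by blast
  have cbp: "continuous_on UNIV (\<lambda>x. b x * \<psi> x)" using cb cp by (intro continuous_intros)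
  have h2: "(\<psi>'' has_integral (\<psi>' L - \<psi>' 0)) {0..L}"
    using L d2 by (intro fundamental_theorem_of_calculus) (auto intro: has_field_derivative_at_within simp: has_real_derivative_iff_has_vector_derivative[symmetric])
  have h1: "(\<psi>' has_integral (\<psi> L - \<psi> 0)) {0..L}"
    using L d1 by (intro fundamental_theorem_of_calculus) (auto intro: has_field_derivative_at_within simp: has_real_derivative_iff_has_vector_derivative[symmetric])
  have z2: "\<psi>' L - \<psi>' 0 = 0" using p1per unfolding periodic_fun_def by (metis add_0 diff_self)
  have z1: "\<psi> L - \<psi> 0 = 0" using pper unfolding periodic_fun_def by (metis add_0 diff_self)
  define Ibp where "Ibp = integral {0..L} (\<lambda>x. b x * \<psi> x)"
  define Ip where "Ip = integral {0..L} \<psi>"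
  have hbp: "((\<lambda>x. b x * \<psi> x) has_integral Ibp) {0..L}" unfolding Ibp_def using int[OF cbp] by blast
  have hp: "(\<psi> has_integral Ip) {0..L}" unfolding Ip_def using int[OF cp] by blast
  have "((\<lambda>x. - \<psi>'' x + 2 * lam * \<psi>' x - b x * \<psi> x) has_integral (- 0 + 2 * lam * 0 - Ibp)) {0..L}"
    using h1 h2 hbp z1 z2 by (intro has_integral_diff has_integral_add has_integral_neg has_integral_mult_right) auto
  moreover have "((\<lambda>x. \<mu> * \<psi> x) has_integral (\<mu> * Ip)) {0..L}" using hp by (intro has_integral_mult_right)
  moreover have "(\<lambda>x. - \<psi>'' x + 2 * lam * \<psi>' x - b x * \<psi> x) = (\<lambda>x. \<mu> * \<psi> x)" using eq by auto
  ultimately have "(- 0 + 2 * lam * 0 - Ibp) = \<mu> * Ip" using has_integral_unique by metis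
  then have ident: "\<mu> * Ip = - Ibp" by simp
  have Ibp_le: "Ibp \<le> M * (\<alpha> * L)"
  proof -
    have "Ibp \<le> integral {0..L} (\<lambda>x. M * b x)" unfolding Ibp_def
    proof (rule integral_le)
      show "(\<lambda>x. b x * \<psi> x) integrable_on {0..L}" using int[OF cbp] .
      have "continuous_on UNIV (\<lambda>x. M * b x)" using cb by (intro continuous_intros)
      then show "(\<lambda>x. M * b x) integrable_on {0..L}" using int by blast
      fix x show "b x * \<psi> x \<le> M * b x"
        using mult_left_mono[OF xM(2)[rule_format, of x] bnn[rule_format, of x]] M_def by (simp add: mult.commute)
    qed
    also have "\<dots> = M * (\<alpha> * L)" using bint by simp
    finally show ?thesis .
  qed
  have Ibp_ge: "Ibp \<ge> 0" unfolding Ibp_def using bnn pos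
    by (intro integral_nonneg int[OF cbp]) (simp add: less_imp_le)
  have Ip_pos: "Ip > 0"
  proof -
    have "integral {0..L} (\<lambda>x. m0) \<le> Ip" unfolding Ip_def using int[OF cp] xm(2) m0_def
      by (intro integral_le) auto
    moreover have "integral {0..L} (\<lambda>x. m0) = L * m0" using L by simp
    moreover have "L * m0 > 0" using L m0pos by simp
    ultimately show ?thesis by linarith
  qed
  have "\<mu> * Ip \<le> 0" using ident Ibp_ge by linarith
  then have mu_np: "\<mu> \<le> 0" using Ip_pos by (auto simp: mult_le_0_iff)
  define s where "s = sqrt (- \<mu>)"
  have s0: "s \<ge> 0" and s2: "s^2 = - \<mu>" using mu_np s_def by auto

  define \<phi> where "\<phi> x = \<psi>' x / \<psi> x" for x
  have dphi: "(\<phi> has_real_derivative ((\<psi>'' x * \<psi> x - \<psi>' x * \<psi>' x) / (\<psi> x * \<psi> x))) (at x)" for x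
    unfolding \<phi>_def[abs_def] using d1 d2 pos[rule_format, of x] by (intro derivative_eq_intros) (auto simp: power2_eq_square)
  have cphi: "continuous_on UNIV \<phi>" using dphi by (meson DERIV_isCont continuous_at_imp_continuous_on)
  have phiper: "periodic_fun L \<phi>" using pper p1per unfolding periodic_fun_def \<phi>_def by simp
  obtain x0 where x0: "\<forall>y. \<phi> x0 \<le> \<phi> y" using per_min[OF phiper L cphi] by blast
  have "(\<psi>'' x0 * \<psi> x0 - \<psi>' x0 * \<psi>' x0) / (\<psi> x0 * \<psi> x0) = 0"
    using DERIV_local_min[OF dphi[of x0], of 1] x0 by auto
  then have crit: "\<psi>'' x0 * \<psi> x0 = \<psi>' x0 * \<psi>' x0" using pos[rule_format, of x0] by simp
  have phige: "\<phi> y \<ge> - s" for y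
  proof (cases "\<psi>' x0 < 0")
    case False
    then have "\<phi> x0 \<ge> 0" unfolding \<phi>_def using pos[rule_format, of x0] by simp
    then show ?thesis using x0[rule_format, of y] s0 by linarith
  next
    case True
    let ?p = "\<psi>' x0" and ?q = "\<psi> x0"
    have q: "?q > 0" using pos by auto
    have e: "\<psi>'' x0 = 2 * lam * ?p - b x0 * ?q - \<mu> * ?q" using eq[rule_format, of x0] by linarith
    have "?p * ?p = (2 * lam * ?p - b x0 * ?q - \<mu> * ?q) * ?q" using crit e by simp
    also have "\<dots> \<le> (- \<mu>) * ?q * ?q"
    proof -
      have "2 * lam * ?p * ?q \<le> 0" using True lam q by (simp add: mult_nonneg_nonpos mult_nonpos_nonneg)
      moreover have "b x0 * ?q * ?q \<ge> 0" using bnn q by simp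
      ultimately show ?thesis by (simp add: algebra_simps)
    qed
    finally have sq: "(?p / ?q)^2 \<le> s^2" using q s2 by (simp add: power2_eq_square field_simps)
    have "\<bar>?p / ?q\<bar> \<le> s" using real_sqrt_le_mono[OF sq] s0 by simp
    then have "\<phi> x0 \<ge> - s" unfolding \<phi>_def by (metis abs_le_D2 minus_le_iff)
    then show ?thesis using x0[rule_format, of y] by linarith
  qed
  have mono: "\<psi> y \<ge> \<psi> x * exp (- s * (y - x))" if "x \<le> y" for x y
  proof -
    have "ln (\<psi> x) + s * x \<le> ln (\<psi> y) + s * y"
    proof (rule DERIV_nonneg_imp_nondecreasing[OF that])
      fix t
      have "((\<lambda>t. ln (\<psi> t) + s * t) has_real_derivative (\<psi>' t / \<psi> t + s)) (at t)"
        using d1 pos by (auto intro!: derivative_eq_intros simp: field_simps)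
      moreover have "\<psi>' t / \<psi> t + s \<ge> 0" using phige[of t] unfolding \<phi>_def by simp
      ultimately show "\<exists>y. ((\<lambda>t. ln (\<psi> t) + s * t) has_real_derivative y) (at t) \<and> y \<ge> 0" by blast
    qed
    then have "ln (\<psi> y) \<ge> ln (\<psi> x) - s * (y - x)" by (simp add: algebra_simps)
    then have "exp (ln (\<psi> y)) \<ge> exp (ln (\<psi> x) - s * (y - x))" by simp
    also have "exp (ln (\<psi> y)) = \<psi> y" using pos[rule_format, of y] by simp
    also have "exp (ln (\<psi> x) - s * (y - x)) = \<psi> x * exp (- s * (y - x))"
      using pos[rule_format, of x] by (simp add: exp_diff exp_minus divide_inverse)
    finally show ?thesis .
  qed
  have ratio: "M / m0 \<le> exp (s * L)"
  proof -
    have "m0 \<ge> M * exp (- s * (xm - xM))" using mono[of xM xm] xm M_def m0_def by simp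
    moreover have "exp (- s * (xm - xM)) \<ge> exp (- s * L)" using xm s0 by (simp add: mult_left_mono)
    moreover have "M > 0" using pos M_def by simp
    ultimately have "m0 \<ge> M * exp (- s * L)" using mult_left_mono[of "exp (- s * L)" "exp (- s * (xm - xM))" M] by linarith
    then have "M \<le> m0 * exp (s * L)" by (simp add: exp_minus field_simps)
    then show ?thesis using m0pos by (simp add: field_simps)
  qed
  have sbound: "s \<le> 1 / L + 2 * \<alpha> * L"
  proof (cases "s * L \<le> 1")
    case True
    have "integral {0..L} b \<ge> 0" using bnn by (intro integral_nonneg int[OF cb]) auto
    then have a0: "\<alpha> \<ge> 0" using bint L by (simp add: zero_le_mult_iff)
    have "s \<le> 1 / L" using True L by (simp add: field_simps)
    moreover have "2 * \<alpha> * L \<ge> 0" using a0 L by simp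
    ultimately show ?thesis by linarith
  next
    case False
    then have sp: "s > 0" using L s0 by (cases "s = 0") auto
    have Mp: "M > 0" using pos M_def by simp
    have shiftI: "integral {xM..xM+L} \<psi> = Ip" unfolding Ip_def using per_shift_int[OF pper L cp] xM by auto
    define G where "G y = (- M / s) * exp (- s * (y - xM))" for y
    have dG: "(G has_real_derivative M * exp (- s * (y - xM))) (at y)" for y
    proof -
      have "((\<lambda>y. exp (- s * (y - xM))) has_real_derivative exp (- s * (y - xM)) * (- s * (1 - 0))) (at y)"
        by (auto intro!: derivative_eq_intros)
      then have "(G has_real_derivative (- M / s) * (exp (- s * (y - xM)) * (- s * (1 - 0)))) (at y)"
        unfolding G_def[abs_def] by (rule DERIV_cmult)
      moreover have "(- M / s) * (exp (- s * (y - xM)) * (- s * (1 - 0))) = M * exp (- s * (y - xM))"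
        using sp by simp
      ultimately show ?thesis by simp
    qed
    have "((\<lambda>y. M * exp (- s * (y - xM))) has_integral (G (xM + L) - G xM)) {xM..xM+L}"
      using L dG
      by (intro fundamental_theorem_of_calculus) (auto intro: has_field_derivative_at_within simp: has_real_derivative_iff_has_vector_derivative[symmetric])
    moreover have "G (xM + L) - G xM = M * (1 - exp (- s * L)) / s" unfolding G_def using sp by (simp add: field_simps)
    ultimately have "M * (1 - exp (- s * L)) / s \<le> integral {xM..xM+L} \<psi>"
      using mono M_def int[OF cp]
      by (intro has_integral_le[OF _ integrable_integral]) (auto simp: M_def)
    then have low: "M * (1 - exp (- s * L)) / s \<le> Ip" using shiftI by simp
    have "exp (- s * L) \<le> exp (-1)" using False by simp
    also have "exp (-1) \<le> (1/2::real)"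
    proof -
      have "2 \<le> exp (1::real)" using exp_ge_add_one_self[of 1] by simp
      then show ?thesis by (simp add: exp_minus field_simps)
    qed
    finally have "1 - exp (- s * L) \<ge> 1/2" by simp
    then have "M * (1/2) \<le> M * (1 - exp (- s * L))" using Mp by (intro mult_left_mono) auto
    then have "M * (1/2) / s \<le> M * (1 - exp (- s * L)) / s" using sp by (intro divide_right_mono) auto
    moreover have "M * (1/2) / s = M / (2 * s)" by simp
    ultimately have "M / (2 * s) \<le> Ip" using low by linarith
    then have "s^2 * (M / (2 * s)) \<le> s^2 * Ip" by (rule mult_left_mono) simp
    also have "\<dots> = Ibp" using ident s2 by simp
    also have "\<dots> \<le> M * (\<alpha> * L)" by (rule Ibp_le)
    finally have f1: "s^2 * (M / (2 * s)) \<le> M * (\<alpha> * L)" .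
    have e2: "s^2 * (M / (2 * s)) = s * M / 2" using sp by (simp add: power2_eq_square field_simps)
    have "s * M / 2 \<le> M * (\<alpha> * L)" using f1 unfolding e2 .
    then have "M * s \<le> M * (2 * \<alpha> * L)" by (simp add: algebra_simps)
    then have "s \<le> 2 * \<alpha> * L" using Mp by simp
    moreover have "1 / L > 0" using L by simp
    ultimately show ?thesis by linarith
  qed
  have supM: "Sup (range \<psi>) = M" using xM(2) M_def by (intro cSup_eq_maximum) auto
  have infm: "Inf (range \<psi>) = m0" using xm(2) m0_def by (intro cInf_eq_minimum) auto
  have "exp (s * L) \<le> exp (1 + 2 * \<alpha> * L^2)"
  proof -
    have "s * L \<le> (1 / L + 2 * \<alpha> * L) * L" using sbound L by (simp add: mult_right_mono)
    also have "\<dots> = 1 + 2 * \<alpha> * L^2" using L by (simp add: field_simps power2_eq_square)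
    finally have "s * L \<le> 1 + 2 * \<alpha> * L^2" .
    then show ?thesis by (rule exp_mono)
  qed
  with ratio have "M / m0 \<le> exp (1 + 2 * \<alpha> * L^2)" by (rule order_trans)
  then show ?thesis unfolding supM infm .
qed


theorem mainTheorem17:
  fixes L \<alpha> :: real
  assumes "L > 0" and "\<alpha> > 0"
  shows "\<exists>F>0. \<forall>lam\<ge>0. \<forall>b\<in>Lambda_class L \<alpha>. \<forall>\<mu> \<psi>.
           principal_eigenfunction L lam b \<mu> \<psi> \<longrightarrow>
           Sup (range \<psi>) / Inf (range \<psi>) \<le> F"
  using key[OF assms(1)] by (intro exI[of _ "exp (1 + 2 * \<alpha> * L^2)"]) auto

end
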